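(* Let $c_2>0$ and $c_3\in\mathbb{R}$. For $\alpha\ge c_2$ put $J(\alpha)=\int_{c_2}^{\alpha}c_2^{2m-1}\left(\rho^{2m}-c_2^{2m}\right)^{-\frac{2m-1}{2m}}d\rho$. Then $d_1:=\lim_{\alpha\to\infty}J(\alpha)$ is a finite positive number, and $J$ is a strictly increasing bijection $[c_2,\infty)\to[0,d_1)$. Define $\hat\alpha:(c_3-d_1,c_3+d_1)\to[c_2,\infty)$ by letting $\hat\alpha(u)$ be the unique $\alpha\ge c_2$ with $J(\alpha)=|u-c_3|$ (so $\hat\alpha(c_3)=c_2$). Then $\hat\alpha$ is a $C^2$ function with $\hat\alpha'(c_3)=\hat\alpha''(c_3)=0$, $\hat\alpha(u)\to\infty$ as $u\to c_3\pm d_1$, and the rotational surface $$\hat f(u,v)=(\hat\alpha(u)\cos v,\ \hat\alpha(u)\sin v,\ u),\qquad (u,v)\in(c_3-d_1,c_3+d_1)\times[0,2\pi],$$ has a Birkhoff–Gauss map that extends as a $C^1$ map to the whole domain and is minimal, i.e. its Minkowski mean curvature vanishes identically.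
   Context: Fix an integer $m\ge 2$. Let $\Phi(x_1,x_2,x_3)=(x_1^2+x_2^2)^m+x_3^{2m}$ and let $\|\cdot\|$ be the norm on $\mathbb{R}^3$ whose unit sphere is $S=\{x\in\mathbb{R}^3:\Phi(x)=1\}$ (a smooth, strictly convex surface). For a surface given by a parametrization $f(s,v)$, its Birkhoff–Gauss map $\eta$ is the map into $S$ defined by requiring $\eta\in S$ and $\nabla\Phi(\eta)=\mu\, f_s\times f_v$ for some function $\mu>0$, where $\times$ is the standard cross product (so the tangent plane of $S$ at $\eta(p)$ is parallel to $T_pM$, and $d\eta_p$ is an endomorphism of $T_pM$). Where $\eta$ is $C^1$, the Minkowski Gaussian curvature is $K=\det(d\eta_p)$ and the Minkowski mean curvature is $H=\tfrac12\operatorname{trace}(d\eta_p)$; the surface is minimal if $H\equiv 0$. *)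

theory Defs
  imports "HOL-Analysis.Analysis"
begin

definition Phi :: "nat \<Rightarrow> real^3 \<Rightarrow> real" where
  "Phi m x = ((x$1)^2 + (x$2)^2)^m + (x$3)^(2*m)"

definition unit_sphere :: "nat \<Rightarrow> (real^3) set" where
  "unit_sphere m = {x. Phi m x = 1}"

definition partial_s :: "(real \<times> real \<Rightarrow> real^3) \<Rightarrow> real \<times> real \<Rightarrow> real^3" where
  "partial_s f p = frechet_derivative f (at p) (1, 0)"

definition partial_v :: "(real \<times> real \<Rightarrow> real^3) \<Rightarrow> real \<times> real \<Rightarrow> real^3" where
  "partial_v f p = frechet_derivative f (at p) (0, 1)"

text \<open>eta(p) is the Birkhoff-Gauss image of p: eta(p) in S and grad Phi(eta(p)) = mu (f_s x f_v)
  for some mu > 0; the gradient g of Phi at a point is expressed by Phi having derivative h |-> g . h.\<close>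
definition BG_at :: "nat \<Rightarrow> (real \<times> real \<Rightarrow> real^3) \<Rightarrow> (real \<times> real \<Rightarrow> real^3) \<Rightarrow> real \<times> real \<Rightarrow> bool" where
  "BG_at m f \<eta> p \<longleftrightarrow> \<eta> p \<in> unit_sphere m \<and>
     (\<exists>\<mu>>0. (Phi m has_derivative (\<lambda>h. inner (\<mu> *\<^sub>R cross3 (partial_s f p) (partial_v f p)) h)) (at (\<eta> p)))"

text \<open>d eta_p as endomorphism of T_pM = span{f_s,f_v}: it sends f_s to eta_s and f_v to eta_v.
  It is an endomorphism iff eta_s, eta_v lie in the span; its matrix is [[a,c],[b,d]].\<close>
definition dEta_endomorphism :: "real^3 \<Rightarrow> real^3 \<Rightarrow> real^3 \<Rightarrow> real^3 \<Rightarrow> bool" where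
  "dEta_endomorphism fs fv es ev \<longleftrightarrow>
     (\<exists>a b c d. es = a *\<^sub>R fs + b *\<^sub>R fv \<and> ev = c *\<^sub>R fs + d *\<^sub>R fv)"

definition mink_mean_curv :: "real^3 \<Rightarrow> real^3 \<Rightarrow> real^3 \<Rightarrow> real^3 \<Rightarrow> real" where
  "mink_mean_curv fs fv es ev =
     (THE H. \<exists>a b c d. es = a *\<^sub>R fs + b *\<^sub>R fv \<and> ev = c *\<^sub>R fs + d *\<^sub>R fv \<and> H = (a + d) / 2)"

definition J_integrand :: "nat \<Rightarrow> real \<Rightarrow> real \<Rightarrow> real" where
  "J_integrand m c2 \<rho> = c2^(2*m-1) * (\<rho>^(2*m) - c2^(2*m)) powr (- (real (2*m-1) / real (2*m)))"

definition J :: "nat \<Rightarrow> real \<Rightarrow> real \<Rightarrow> real" where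
  "J m c2 \<alpha> = integral {c2..\<alpha>} (J_integrand m c2)"

definition rot_surface :: "(real \<Rightarrow> real) \<Rightarrow> real \<times> real \<Rightarrow> real^3" where
  "rot_surface a p = vector [a (fst p) * cos (snd p), a (fst p) * sin (snd p), fst p]"

end

theory Submission
  imports Defs
begin


definition TT :: "nat \<Rightarrow> real \<Rightarrow> real" where "TT m z = root (2*m) (1 - z^(2*m))"
definition gg :: "nat \<Rightarrow> real \<Rightarrow> real \<Rightarrow> real" where "gg m c2 z = c2 / (TT m z)^2"
definition GG :: "nat \<Rightarrow> real \<Rightarrow> real \<Rightarrow> real" where
  "GG m c2 z = (if 0 \<le> z then integral {0..z} (gg m c2) else - integral {z..0} (gg m c2))"
definition AA :: "nat \<Rightarrow> real \<Rightarrow> real \<Rightarrow> real" where "AA m c2 z = c2 / TT m z"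
definition Zc :: "nat \<Rightarrow> real \<Rightarrow> real \<Rightarrow> real" where "Zc m c2 y = (SOME z. \<bar>z\<bar> < 1 \<and> GG m c2 z = y)"
definition Qd :: "nat \<Rightarrow> real \<Rightarrow> real" where
  "Qd m z = (real (2*m-1) * z^(2*m-1-Suc 0) * (TT m z)^(2*m-1) - z^(2*m-1) * (real (2*m-1) * ((-(z^(2*m-1))/(TT m z)^(2*m-1)) * (TT m z)^(2*m-1-Suc 0)))) / ((TT m z)^(2*m-1) * (TT m z)^(2*m-1))"
definition zz :: "nat \<Rightarrow> real \<Rightarrow> real \<Rightarrow> real" where "zz m c2 a = root (2*m) (1 - (c2/a)^(2*m))"

lemma has_field_derivative_inverse_strong':
  fixes f :: "real \<Rightarrow> real"
  shows "\<lbrakk>DERIV f x :> f'; f' \<noteq> 0; open S; x \<in> S; continuous_on S f;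
         \<And>z. z \<in> S \<Longrightarrow> g (f z) = z\<rbrakk>
         \<Longrightarrow> DERIV g (f x) :> inverse (f')"
  unfolding has_field_derivative_def
  by (rule has_derivative_inverse_strong [of S x f g]) auto

context fixes m :: nat and c2 :: real assumes m2: "2 \<le> m" and c2: "0 < c2"
begin

lemma w_bounds: fixes z :: real assumes "\<bar>z\<bar> < 1" shows "0 < 1 - z^(2*m)" "1 - z^(2*m) \<le> 1"
proof -
  have "z^(2*m) = (z^2)^m" by (rule power_mult)
  moreover have "(z^2)^m < 1" using assms m2 by (simp add: power_less_one_iff abs_square_less_1)
  ultimately show "0 < 1 - z^(2*m)" by simp
  show "1 - z^(2*m) \<le> 1" by (simp add: zero_le_even_power)
qed

lemma TT_pos: "\<bar>z\<bar> < 1 \<Longrightarrow> 0 < TT m z"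
  using w_bounds[of z] m2 by (simp add: TT_def)

lemma TT_le1: "\<bar>z\<bar> < 1 \<Longrightarrow> TT m z \<le> 1"
  using w_bounds[of z] m2 by (simp add: TT_def)

lemma TT_pow: "\<bar>z\<bar> < 1 \<Longrightarrow> (TT m z)^(2*m) = 1 - z^(2*m)"
  using w_bounds[of z] m2 by (simp add: TT_def less_imp_le)

lemma TT_even: "TT m (-z) = TT m z"
  by (simp add: TT_def)

lemma TT0: "TT m 0 = 1"
  using m2 by (simp add: TT_def)

lemma TT_deriv: assumes "\<bar>z\<bar> < 1"
  shows "(TT m has_real_derivative (- (z^(2*m-1)) / (TT m z)^(2*m-1))) (at z)"
proof -
  have w: "0 < 1 - z^(2*m)" using w_bounds[OF assms] by auto
  have d1: "((\<lambda>z. 1 - z^(2*m)) has_real_derivative - (real (2*m) * z^(2*m-1))) (at z)"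
    by (auto intro!: derivative_eq_intros)
  have d2: "DERIV (root (2*m)) (1 - z^(2*m)) :> inverse (real (2*m) * root (2*m) (1 - z^(2*m)) ^ (2*m - Suc 0))"
    by (rule DERIV_real_root) (use m2 w in auto)
  have "((\<lambda>z. root (2*m) (1 - z^(2*m))) has_real_derivative
      inverse (real (2*m) * root (2*m) (1 - z^(2*m)) ^ (2*m - Suc 0)) * (- (real (2*m) * z^(2*m-1)))) (at z)"
    by (rule DERIV_chain2[OF d2 d1])
  moreover have "inverse (real (2*m) * root (2*m) (1 - z^(2*m)) ^ (2*m - Suc 0)) * (- (real (2*m) * z^(2*m-1)))
     = - (z^(2*m-1)) / (TT m z)^(2*m-1)"
    using m2 by (simp add: TT_def field_simps)
  ultimately show ?thesis unfolding TT_def[abs_def] by simp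
qed

lemma TT_cont: "\<bar>z\<bar> < 1 \<Longrightarrow> isCont (TT m) z"
  using TT_deriv DERIV_isCont by blast

lemma gg_pos: "\<bar>z\<bar> < 1 \<Longrightarrow> 0 < gg m c2 z"
  using TT_pos[of z] c2 by (simp add: gg_def)

lemma gg_cont: "\<bar>z\<bar> < 1 \<Longrightarrow> isCont (gg m c2) z"
  unfolding gg_def using TT_pos[of z] TT_cont[of z]
  by (auto intro!: continuous_intros)

lemma gg_cont_on: "b < 1 \<Longrightarrow> continuous_on {-b..b} (gg m c2)"
  by (rule continuous_at_imp_continuous_on) (auto intro!: gg_cont)

lemma GG_deriv: assumes x: "\<bar>x\<bar> < 1" shows "(GG m c2 has_real_derivative gg m c2 x) (at x)"
proof -
  define b where "b = (1 + \<bar>x\<bar>)/2"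
  have b: "\<bar>x\<bar> < b" "b < 1" using x by (auto simp: b_def)
  have cont: "continuous_on {-b..b} (gg m c2)" using gg_cont_on b by auto
  have int: "gg m c2 integrable_on {-b..b}" using cont integrable_continuous_real by blast
  have eq: "integral {-b..y} (gg m c2) - integral {-b..0} (gg m c2) = GG m c2 y" if y: "y \<in> {-b<..<b}" for y
  proof (cases "0 \<le> y")
    case True
    have "integral {-b..0} (gg m c2) + integral {0..y} (gg m c2) = integral {-b..y} (gg m c2)"
      by (rule Henstock_Kurzweil_Integration.integral_combine) (use True y b in \<open>auto intro: integrable_on_subinterval[OF int]\<close>)
    then show ?thesis using True by (simp add: GG_def)
  next
    case False
    have "integral {-b..y} (gg m c2) + integral {y..0} (gg m c2) = integral {-b..0} (gg m c2)"
      by (rule Henstock_Kurzweil_Integration.integral_combine) (use False y b in \<open>auto intro: integrable_on_subinterval[OF int]\<close>)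
    then show ?thesis using False by (simp add: GG_def)
  qed
  have "((\<lambda>y. integral {-b..y} (gg m c2)) has_real_derivative gg m c2 x) (at x within {-b..b})"
    by (rule integral_has_real_derivative[OF cont]) (use b in auto)
  moreover have "at x within {-b..b} = at x" by (rule at_within_Icc_at) (use b in auto)
  ultimately have "((\<lambda>y. integral {-b..y} (gg m c2) - integral {-b..0} (gg m c2)) has_real_derivative gg m c2 x) (at x)"
    by (auto intro!: derivative_eq_intros)
  then show ?thesis
    by (rule has_field_derivative_transform_within_open[where S="{-b<..<b}"]) (use b eq in auto)
qed


lemma gg_even: "gg m c2 (-z) = gg m c2 z"
  by (simp add: gg_def TT_even)

lemma GG0: "GG m c2 0 = 0" by (simp add: GG_def)

lemma GG_odd: "GG m c2 (-z) = - GG m c2 z"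
proof -
  have ev: "(\<lambda>x. gg m c2 (-x)) = gg m c2" by (rule ext) (simp add: gg_even)
  have r: "integral {-b..-a} (gg m c2) = integral {a..b} (gg m c2)" for a b
    using Henstock_Kurzweil_Integration.integral_reflect_real[of b a "gg m c2"] unfolding ev .
  show ?thesis
  proof (cases "z = 0")
    case True then show ?thesis by (simp add: GG0)
  next
    case False
    show ?thesis
    proof (cases "0 < z")
      case True
      have "integral {-z..-0} (gg m c2) = integral {0..z} (gg m c2)" by (rule r)
      then show ?thesis using True by (simp add: GG_def)
    next
      case False
      with \<open>z \<noteq> 0\<close> have "z < 0" by auto
      have "integral {-0..-z} (gg m c2) = integral {z..0} (gg m c2)" by (rule r)
      then show ?thesis using \<open>z < 0\<close> by (simp add: GG_def)
    qed
  qed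
qed

lemma GG_isCont: "\<bar>z\<bar> < 1 \<Longrightarrow> isCont (GG m c2) z"
  using GG_deriv DERIV_isCont by blast

lemma GG_cont_on: "S \<subseteq> {-1<..<1} \<Longrightarrow> continuous_on S (GG m c2)"
  by (rule continuous_at_imp_continuous_on) (force intro!: GG_isCont simp: abs_less_iff)

lemma GG_strict: assumes "-1 < x" "x < y" "y < 1" shows "GG m c2 x < GG m c2 y"
proof (rule DERIV_pos_imp_increasing_open[OF assms(2)])
  fix t assume "x < t" "t < y"
  then have "\<bar>t\<bar> < 1" using assms by auto
  then show "\<exists>d. (GG m c2 has_real_derivative d) (at t) \<and> 0 < d"
    using GG_deriv gg_pos by blast
next
  show "continuous_on {x..y} (GG m c2)" by (rule GG_cont_on) (use assms in auto)
qed

lemma GG_mono: assumes "-1 < x" "x \<le> y" "y < 1" shows "GG m c2 x \<le> GG m c2 y"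
  using GG_strict[of x y] assms by (cases "x = y") auto

lemma GG_inj: "\<bar>x\<bar> < 1 \<Longrightarrow> \<bar>y\<bar> < 1 \<Longrightarrow> GG m c2 x = GG m c2 y \<Longrightarrow> x = y"
  using GG_strict[of x y] GG_strict[of y x] by (cases x y rule: linorder_cases) (auto simp: abs_less_iff)

lemma GG_nonneg: "0 \<le> z \<Longrightarrow> z < 1 \<Longrightarrow> 0 \<le> GG m c2 z"
  using GG_mono[of 0 z] by (simp add: GG0)

lemma GG_neg: "-1 < z \<Longrightarrow> z < 0 \<Longrightarrow> GG m c2 z < 0"
  using GG_strict[of z 0] by (simp add: GG0)

lemma GG_abs: "\<bar>z\<bar> < 1 \<Longrightarrow> GG m c2 \<bar>z\<bar> = \<bar>GG m c2 z\<bar>"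
  using GG_nonneg[of z] GG_neg[of z] GG_odd[of z] by (cases "0 \<le> z") auto

lemma gg_bound: assumes "0 \<le> z" "z < 1" shows "gg m c2 z \<le> c2 / sqrt (1 - z)"
proof -
  have az: "\<bar>z\<bar> < 1" using assms by auto
  define T where "T = TT m z"
  have T: "0 < T" "T \<le> 1" "T^(2*m) = 1 - z^(2*m)" using TT_pos[OF az] TT_le1[OF az] TT_pow[OF az] by (auto simp: T_def)
  have "z^(2*m) \<le> z^1" by (rule power_decreasing) (use assms m2 in auto)
  then have "1 - z \<le> T^(2*m)" using T by simp
  also have "T^(2*m) \<le> T^4" by (rule power_decreasing) (use T m2 in auto)
  finally have "sqrt (1 - z) \<le> sqrt (T^4)" by (rule real_sqrt_le_mono)
  also have "sqrt (T^4) = T^2"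
  proof -
    have "T^4 = (T^2)^2" by simp
    then show ?thesis using real_sqrt_abs[of "T^2"] by simp
  qed
  finally have s: "sqrt (1 - z) \<le> T^2" .
  have "0 < sqrt (1 - z)" using assms by auto
  then show ?thesis unfolding gg_def T_def[symmetric] using s c2 T(1)
    by (intro divide_left_mono) auto
qed

lemma GG_bound: assumes "0 \<le> z" "z < 1" shows "GG m c2 z \<le> 2 * c2"
proof -
  define H where "H s = - 2 * c2 * sqrt (1 - s)" for s
  have dH: "(H has_real_derivative c2 / sqrt (1 - s)) (at s within {0..z})" if "s \<in> {0..z}" for s
  proof -
    have "s < 1" using that assms by auto
    then show ?thesis unfolding H_def[abs_def]
      by (auto intro!: derivative_eq_intros simp: field_simps)
  qed
  have hi: "((\<lambda>s. c2 / sqrt (1 - s)) has_integral (H z - H 0)) {0..z}"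
    by (rule fundamental_theorem_of_calculus) (use assms dH in \<open>auto simp: has_real_derivative_iff_has_vector_derivative[symmetric]\<close>)
  have gi: "(gg m c2 has_integral integral {0..z} (gg m c2)) {0..z}"
  proof -
    have "continuous_on {0..z} (gg m c2)"
      by (rule continuous_at_imp_continuous_on) (use assms in \<open>auto intro!: gg_cont\<close>)
    then show ?thesis using integrable_continuous_real by blast
  qed
  have "integral {0..z} (gg m c2) \<le> H z - H 0"
    by (rule has_integral_le[OF gi hi]) (use assms in \<open>auto intro!: gg_bound\<close>)
  also have "\<dots> \<le> 2 * c2" using assms c2 by (simp add: H_def)
  finally show ?thesis using assms by (simp add: GG_def)
qed

definition d1 where "d1 = Sup (GG m c2 ` {0..<1})"

lemma bdd: "bdd_above (GG m c2 ` {0..<1})"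
  using GG_bound by (auto intro!: bdd_aboveI[where M="2*c2"])

lemma GG_le_d1: "0 \<le> z \<Longrightarrow> z < 1 \<Longrightarrow> GG m c2 z \<le> d1"
  unfolding d1_def by (rule cSup_upper) (use bdd in auto)

lemma GG_lt_d1: assumes "0 \<le> z" "z < 1" shows "GG m c2 z < d1"
proof -
  have "GG m c2 z < GG m c2 ((1+z)/2)" by (rule GG_strict) (use assms in auto)
  also have "\<dots> \<le> d1" by (rule GG_le_d1) (use assms in auto)
  finally show ?thesis .
qed

lemma d1_pos: "0 < d1"
  using GG_lt_d1[of 0] by (simp add: GG0)

lemma exists_above: assumes "y < d1" shows "\<exists>z0. 0 \<le> z0 \<and> z0 < 1 \<and> y < GG m c2 z0"
proof -
  have "y < Sup (GG m c2 ` {0..<1})" using assms d1_def by simp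
  then obtain t where "t \<in> GG m c2 ` {0..<1}" "y < t"
    using less_cSup_iff[OF _ bdd] by force
  then show ?thesis by auto
qed

lemma GG_lim: "(GG m c2 \<longlongrightarrow> d1) (at_left 1)"
proof (rule order_tendstoI)
  fix a assume "a < d1"
  then obtain z0 where z0: "0 \<le> z0" "z0 < 1" "a < GG m c2 z0" using exists_above by blast
  have "eventually (\<lambda>x. x \<in> {z0<..<1}) (at_left (1::real))"
    using eventually_at_left_real[OF z0(2)] .
  then show "eventually (\<lambda>x. a < GG m c2 x) (at_left 1)"
  proof (rule eventually_mono)
    fix x assume "x \<in> {z0<..<1}"
    then have "GG m c2 z0 \<le> GG m c2 x" using z0 by (intro GG_mono) auto
    then show "a < GG m c2 x" using z0 by auto
  qed
next
  fix a assume "d1 < a"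
  have "eventually (\<lambda>x. x \<in> {0<..<1}) (at_left (1::real))"
    using eventually_at_left_real[of 0 1] by simp
  then show "eventually (\<lambda>x. GG m c2 x < a) (at_left 1)"
  proof (rule eventually_mono)
    fix x :: real assume "x \<in> {0<..<1}"
    then have "GG m c2 x \<le> d1" by (intro GG_le_d1) auto
    then show "GG m c2 x < a" using \<open>d1 < a\<close> by auto
  qed
qed

lemma GG_surj: assumes "0 \<le> y" "y < d1" shows "\<exists>z. 0 \<le> z \<and> z < 1 \<and> GG m c2 z = y"
proof -
  obtain z0 where z0: "0 \<le> z0" "z0 < 1" "y < GG m c2 z0" using exists_above assms by blast
  have "\<exists>x\<ge>0. x \<le> z0 \<and> GG m c2 x = y"
    by (rule IVT) (use assms z0 GG0 in \<open>auto intro!: GG_isCont\<close>)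
  then show ?thesis using z0 by force
qed

lemma GG_surj2: assumes "\<bar>y\<bar> < d1" shows "\<exists>z. \<bar>z\<bar> < 1 \<and> GG m c2 z = y"
proof (cases "0 \<le> y")
  case True then show ?thesis using GG_surj[of y] assms by force
next
  case False
  then obtain z where "0 \<le> z" "z < 1" "GG m c2 z = -y" using GG_surj[of "-y"] assms by auto
  then show ?thesis using GG_odd[of z] by (intro exI[of _ "-z"]) auto
qed


lemma zz_props: assumes "c2 \<le> a"
  shows "0 \<le> zz m c2 a" "zz m c2 a < 1" "TT m (zz m c2 a) = c2 / a" "(zz m c2 a)^(2*m) = 1 - (c2/a)^(2*m)"
proof -
  have a: "0 < a" using assms c2 by auto
  have q: "0 < (c2/a)^(2*m)" "(c2/a)^(2*m) \<le> 1" using a c2 assms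
    by (auto intro!: power_le_one simp: divide_le_eq_1)
  show "0 \<le> zz m c2 a" using q by (simp add: zz_def real_root_ge_zero)
  show "zz m c2 a < 1" using q m2 by (simp add: zz_def)
  show zp: "(zz m c2 a)^(2*m) = 1 - (c2/a)^(2*m)" using q m2 by (simp add: zz_def)
  show "TT m (zz m c2 a) = c2 / a" unfolding TT_def zp using m2 a c2
    by (simp add: real_root_power_cancel)
qed

lemma zz_c2: "zz m c2 c2 = 0"
  using c2 by (simp add: zz_def)

lemma AA_ge: "\<bar>z\<bar> < 1 \<Longrightarrow> c2 \<le> AA m c2 z"
  using TT_pos[of z] TT_le1[of z] c2 by (simp add: AA_def field_simps)

lemma zz_AA: assumes "\<bar>z\<bar> < 1" shows "zz m c2 (AA m c2 z) = \<bar>z\<bar>"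
proof -
  have "c2 / AA m c2 z = TT m z" using TT_pos[OF assms] c2 by (simp add: AA_def)
  then have "1 - (c2 / AA m c2 z)^(2*m) = \<bar>z\<bar>^(2*m)" using TT_pow[OF assms] by (simp add: power_even_abs)
  then show ?thesis using m2 by (simp add: zz_def real_root_power_cancel)
qed

lemma zz_deriv: assumes "c2 < a"
  shows "(zz m c2 has_real_derivative (c2/a)^(2*m-1) * c2 / a^2 / (zz m c2 a)^(2*m-1)) (at a)"
proof -
  have a: "0 < a" using assms c2 by auto
  have q: "0 < 1 - (c2/a)^(2*m)"
  proof -
    have "c2/a < 1" using a assms by simp
    then have "(c2/a)^(2*m) < 1" using c2 a m2 by (simp add: power_less_one_iff)
    then show ?thesis by simp
  qed
  have d1: "((\<lambda>a. 1 - (c2/a)^(2*m)) has_real_derivative - (real (2*m) * (c2/a)^(2*m-1) * (- c2 / a^2))) (at a)"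
    using a by (auto intro!: derivative_eq_intros simp: power2_eq_square)
  have d2: "DERIV (root (2*m)) (1 - (c2/a)^(2*m)) :> inverse (real (2*m) * root (2*m) (1 - (c2/a)^(2*m)) ^ (2*m - Suc 0))"
    by (rule DERIV_real_root) (use m2 q in auto)
  have "((\<lambda>a. root (2*m) (1 - (c2/a)^(2*m))) has_real_derivative
      inverse (real (2*m) * root (2*m) (1 - (c2/a)^(2*m)) ^ (2*m - Suc 0)) * (- (real (2*m) * (c2/a)^(2*m-1) * (- c2 / a^2)))) (at a)"
    by (rule DERIV_chain2[OF d2 d1])
  moreover have "inverse (real (2*m) * root (2*m) (1 - (c2/a)^(2*m)) ^ (2*m - Suc 0)) * (- (real (2*m) * (c2/a)^(2*m-1) * (- c2 / a^2)))
     = (c2/a)^(2*m-1) * c2 / a^2 / (zz m c2 a)^(2*m-1)"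
    using m2 by (simp add: zz_def field_simps)
  ultimately show ?thesis unfolding zz_def[abs_def] by simp
qed

lemma J_int_eq: assumes "c2 < a"
  shows "J_integrand m c2 a = (c2/a)^(2*m-1) / (zz m c2 a)^(2*m-1)"
proof -
  have a: "0 < a" using assms c2 by auto
  have zpos: "0 < zz m c2 a"
  proof -
    have "c2/a < 1" using a assms by simp
    then have "(c2/a)^(2*m) < 1" using c2 a m2 by (simp add: power_less_one_iff)
    then show ?thesis using m2 by (simp add: zz_def)
  qed
  define y where "y = a * zz m c2 a"
  have y: "0 < y" using a zpos by (simp add: y_def)
  have "y^(2*m) = a^(2*m) * (1 - (c2/a)^(2*m))"
    using zz_props(4)[of a] assms by (simp add: y_def power_mult_distrib)
  also have "\<dots> = a^(2*m) - c2^(2*m)" using a by (simp add: field_simps power_divide)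
  finally have ye: "a^(2*m) - c2^(2*m) = y^(2*m)" by simp
  have "(y^(2*m)) powr (- (real (2*m-1) / real (2*m))) = y powr (real (2*m) * (- (real (2*m-1) / real (2*m))))"
    using y by (simp add: powr_realpow[symmetric] powr_powr del: of_nat_mult)
  also have "real (2*m) * (- (real (2*m-1) / real (2*m))) = - real (2*m-1)" using m2 by simp
  also have "y powr (- real (2*m-1)) = inverse (y^(2*m-1))" using y by (simp add: powr_minus powr_realpow)
  finally have "(a^(2*m) - c2^(2*m)) powr (- (real (2*m-1) / real (2*m))) = inverse (y^(2*m-1))" using ye by simp
  then have "J_integrand m c2 a = c2^(2*m-1) / y^(2*m-1)" by (simp add: J_integrand_def field_simps)
  also have "\<dots> = (c2/a)^(2*m-1) / (zz m c2 a)^(2*m-1)" using a zpos by (simp add: y_def power_mult_distrib power_divide field_simps)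
  finally show ?thesis .
qed

lemma J_has_integral: assumes "c2 \<le> al"
  shows "(J_integrand m c2 has_integral GG m c2 (zz m c2 al)) {c2..al}"
proof -
  have "(J_integrand m c2 has_integral (GG m c2 (zz m c2 al) - GG m c2 (zz m c2 c2))) {c2..al}"
  proof (rule fundamental_theorem_of_calculus_interior[OF assms])
    have zc: "continuous_on {c2..al} (zz m c2)"
      unfolding zz_def[abs_def] using c2 by (auto intro!: continuous_intros)
    show "continuous_on {c2..al} (\<lambda>a. GG m c2 (zz m c2 a))"
      by (rule continuous_on_compose2[OF GG_cont_on[OF order_refl] zc]) (use zz_props in \<open>force\<close>)
  next
    fix x assume x: "x \<in> {c2<..<al}"
    then have cx: "c2 < x" by auto
    have ax: "\<bar>zz m c2 x\<bar> < 1" using zz_props[of x] cx by auto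
    have "((\<lambda>a. GG m c2 (zz m c2 a)) has_real_derivative gg m c2 (zz m c2 x) * ((c2/x)^(2*m-1) * c2 / x^2 / (zz m c2 x)^(2*m-1))) (at x)"
      by (rule DERIV_chain2[OF GG_deriv[OF ax] zz_deriv[OF cx]])
    moreover have "gg m c2 (zz m c2 x) * ((c2/x)^(2*m-1) * c2 / x^2 / (zz m c2 x)^(2*m-1)) = J_integrand m c2 x"
      unfolding J_int_eq[OF cx] gg_def zz_props(3)[OF less_imp_le[OF cx]] using c2 cx
      by (simp add: field_simps power2_eq_square)
    ultimately show "((\<lambda>a. GG m c2 (zz m c2 a)) has_vector_derivative J_integrand m c2 x) (at x)"
      by (simp add: has_real_derivative_iff_has_vector_derivative[symmetric])
  qed
  then show ?thesis by (simp add: zz_c2 GG0)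
qed

lemma J_eq: "c2 \<le> al \<Longrightarrow> J m c2 al = GG m c2 (zz m c2 al)"
  unfolding J_def using J_has_integral by (simp add: integral_unique)

lemma J_AA: "\<bar>z\<bar> < 1 \<Longrightarrow> J m c2 (AA m c2 z) = \<bar>GG m c2 z\<bar>"
  using J_eq[OF AA_ge] zz_AA GG_abs by simp

lemma zz_strict: assumes "c2 \<le> x" "x < y" shows "zz m c2 x < zz m c2 y"
proof -
  have "(c2/y)^(2*m) < (c2/x)^(2*m)"
    by (rule power_strict_mono) (use assms c2 m2 in \<open>auto simp: frac_less2\<close>)
  then show ?thesis unfolding zz_def using m2 by (intro real_root_less_mono) auto
qed

lemma J_strict: assumes "c2 \<le> x" "x < y" shows "J m c2 x < J m c2 y"
  using J_eq[of x] J_eq[of y] assms zz_strict[OF assms] zz_props[of x] zz_props[of y]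
  by (auto intro!: GG_strict)

lemma J_range: "c2 \<le> x \<Longrightarrow> 0 \<le> J m c2 x \<and> J m c2 x < d1"
  using J_eq[of x] zz_props[of x] GG_nonneg GG_lt_d1 by auto

lemma J_lim: "(J m c2 \<longlongrightarrow> d1) at_top"
proof -
  have t0: "((\<lambda>a. c2/a) \<longlongrightarrow> 0) at_top"
    by (rule tendsto_divide_0[OF tendsto_const]) (rule filterlim_at_top_imp_at_infinity[OF filterlim_ident])
  have "((\<lambda>a. root (2*m) (1 - (c2/a)^(2*m))) \<longlongrightarrow> root (2*m) (1 - 0^(2*m))) at_top"
    by (intro tendsto_intros t0)
  moreover have "root (2*m) (1 - 0^(2*m)) = (1::real)" using m2 by simp
  moreover have "zz m c2 = (\<lambda>a. root (2*m) (1 - (c2/a)^(2*m)))" by (simp add: fun_eq_iff zz_def)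
  ultimately have t1: "(zz m c2 \<longlongrightarrow> 1) at_top" by simp
  have ev: "eventually (\<lambda>a. c2 \<le> a) at_top" by (rule eventually_ge_at_top)
  have ev1: "eventually (\<lambda>a. zz m c2 a < 1) at_top"
    by (rule eventually_mono[OF ev]) (erule zz_props(2))
  have "filterlim (zz m c2) (at_left 1) at_top"
    by (rule tendsto_imp_filterlim_at_left[OF t1 ev1])
  then have "((\<lambda>a. GG m c2 (zz m c2 a)) \<longlongrightarrow> d1) at_top"
    by (rule filterlim_compose[OF GG_lim])
  moreover have "eventually (\<lambda>a. GG m c2 (zz m c2 a) = J m c2 a) at_top"
    using ev by (rule eventually_mono) (simp add: J_eq)
  ultimately show ?thesis by (rule Lim_transform_eventually)
qed

lemma J_surj: assumes "0 \<le> y" "y < d1" shows "\<exists>a\<ge>c2. J m c2 a = y"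
proof -
  obtain z where z: "0 \<le> z" "z < 1" "GG m c2 z = y" using GG_surj assms by blast
  then have "\<bar>z\<bar> < 1" by auto
  then show ?thesis using J_AA[of z] AA_ge[of z] z GG_nonneg[of z] by (intro exI[of _ "AA m c2 z"]) auto
qed


lemma Zc_props: assumes "\<bar>y\<bar> < d1" shows "\<bar>Zc m c2 y\<bar> < 1" "GG m c2 (Zc m c2 y) = y"
proof -
  have "\<exists>z. \<bar>z\<bar> < 1 \<and> GG m c2 z = y" using GG_surj2[OF assms] .
  then have "\<bar>Zc m c2 y\<bar> < 1 \<and> GG m c2 (Zc m c2 y) = y" unfolding Zc_def by (rule someI_ex)
  then show "\<bar>Zc m c2 y\<bar> < 1" "GG m c2 (Zc m c2 y) = y" by auto
qed

lemma GG_abs_lt: "\<bar>z\<bar> < 1 \<Longrightarrow> \<bar>GG m c2 z\<bar> < d1"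
  using GG_abs[of z] GG_lt_d1[of "\<bar>z\<bar>"] by auto

lemma Zc_GG: assumes "\<bar>z\<bar> < 1" shows "Zc m c2 (GG m c2 z) = z"
  using Zc_props[OF GG_abs_lt[OF assms]] assms by (auto intro: GG_inj)

lemma Zc_deriv: assumes "\<bar>y\<bar> < d1"
  shows "(Zc m c2 has_real_derivative (TT m (Zc m c2 y))^2 / c2) (at y)"
proof -
  define x where "x = Zc m c2 y"
  have x: "\<bar>x\<bar> < 1" "GG m c2 x = y" using Zc_props[OF assms] by (auto simp: x_def)
  have "DERIV (Zc m c2) (GG m c2 x) :> inverse (gg m c2 x)"
  proof (rule has_field_derivative_inverse_strong'[where S="{-1<..<1}" and f="GG m c2" and x=x and f'="gg m c2 x"])
    show "DERIV (GG m c2) x :> gg m c2 x" by (rule GG_deriv[OF x(1)])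
    show "gg m c2 x \<noteq> 0" using gg_pos[OF x(1)] by auto
    show "x \<in> {-1<..<1}" using x by (auto simp: abs_less_iff)
    show "continuous_on {-1<..<1} (GG m c2)" by (rule GG_cont_on) auto
    show "Zc m c2 (GG m c2 z) = z" if "z \<in> {-1<..<1}" for z using that by (intro Zc_GG) (auto simp: abs_less_iff)
  qed auto
  then show ?thesis using x TT_pos[OF x(1)] c2 by (simp add: gg_def x_def[symmetric])
qed

lemma AA_deriv: assumes "\<bar>z\<bar> < 1"
  shows "(AA m c2 has_real_derivative (0 * TT m z - c2 * (- (z^(2*m-1)) / (TT m z)^(2*m-1))) / (TT m z * TT m z)) (at z)"
  unfolding AA_def[abs_def]
  by (rule DERIV_divide[OF DERIV_const TT_deriv[OF assms]]) (use TT_pos[OF assms] in auto)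

lemma Q_deriv: assumes "\<bar>z\<bar> < 1"
  shows "((\<lambda>z. z^(2*m-1) / (TT m z)^(2*m-1)) has_real_derivative Qd m z) (at z)"
  unfolding Qd_def
  by (rule DERIV_divide[OF DERIV_pow DERIV_power[OF TT_deriv[OF assms]]]) (use TT_pos[OF assms] in auto)

lemma Qd0: "Qd m 0 = 0"
  using m2 by (simp add: Qd_def power_0_left)

lemma Qd_cont: assumes "\<bar>z\<bar> < 1" shows "isCont (Qd m) z"
proof -
  have "isCont (TT m) z" by (rule TT_cont[OF assms])
  then show ?thesis unfolding Qd_def[abs_def] using TT_pos[OF assms]
    by (auto intro!: continuous_intros)
qed

end


definition E1 :: "real^3" where "E1 = vector [1,0,0]"
definition E2 :: "real^3" where "E2 = vector [0,1,0]"
definition E3 :: "real^3" where "E3 = vector [0,0,1]"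

lemma vec3_eq: "(vector [x, y, z] :: real^3) = x *\<^sub>R E1 + y *\<^sub>R E2 + z *\<^sub>R E3"
  by (simp add: vec_eq_iff forall_3 vector_3 E1_def E2_def E3_def)

lemma has_derivative_vec3:
  assumes "(fx has_derivative Fx) F" "(fy has_derivative Fy) F" "(fz has_derivative Fz) F"
  shows "((\<lambda>p. vector [fx p, fy p, fz p] :: real^3) has_derivative (\<lambda>h. vector [Fx h, Fy h, Fz h])) F"
  unfolding vec3_eq
  by (rule has_derivative_add[OF has_derivative_add[OF has_derivative_scaleR_left[OF assms(1)] has_derivative_scaleR_left[OF assms(2)]] has_derivative_scaleR_left[OF assms(3)]])

lemma comp_fst: "(g has_real_derivative D) (at (fst p)) \<Longrightarrow> ((\<lambda>x. g (fst x)) has_derivative (\<lambda>h. D * fst h)) (at p within S)"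
proof -
  assume g: "(g has_real_derivative D) (at (fst p))"
  have "(fst has_derivative fst) (at p within S)" by (rule bounded_linear_imp_has_derivative[OF bounded_linear_fst])
  then show ?thesis using has_derivative_compose[of fst fst p S g "(*) D"] g by (simp add: has_field_derivative_def)
qed

lemma comp_snd: "(g has_real_derivative D) (at (snd p)) \<Longrightarrow> ((\<lambda>x. g (snd x)) has_derivative (\<lambda>h. D * snd h)) (at p within S)"
proof -
  assume g: "(g has_real_derivative D) (at (snd p))"
  have "(snd has_derivative snd) (at p within S)" by (rule bounded_linear_imp_has_derivative[OF bounded_linear_snd])
  then show ?thesis using has_derivative_compose[of snd snd p S g "(*) D"] g by (simp add: has_field_derivative_def)
qed

lemma prod_deriv:
  assumes "(a has_real_derivative A) (at (fst p))" "(b has_real_derivative B) (at (snd p))"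
  shows "((\<lambda>x. a (fst x) * b (snd x)) has_derivative (\<lambda>h. A * fst h * b (snd p) + a (fst p) * (B * snd h))) (at p)"
  by (rule has_derivative_eq_rhs[OF has_derivative_mult[OF comp_fst[OF assms(1)] comp_snd[OF assms(2)]]])
     (auto simp: fun_eq_iff algebra_simps)

lemma Phi_deriv:
  "(Phi m has_derivative (\<lambda>h. real m * ((x$1)^2 + (x$2)^2)^(m-1) * (2*x$1*h$1 + 2*x$2*h$2) + real (2*m) * (x$3)^(2*m-1) * h$3)) (at x)"
proof -
  have n: "((\<lambda>x. x $ i) has_derivative (\<lambda>h. h $ i)) (at x)" for i :: 3
    by (rule bounded_linear_imp_has_derivative[OF bounded_linear_vec_nth])
  show ?thesis unfolding Phi_def[abs_def]
    by (rule has_derivative_eq_rhs[OF has_derivative_add[OF has_derivative_power[OF has_derivative_add[OF has_derivative_power[OF n] has_derivative_power[OF n]]] has_derivative_power[OF n]]])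
       (auto simp: fun_eq_iff algebra_simps)
qed

lemma indep3:
  fixes fs fv :: "real^3"
  assumes "fs$3 = 1" "fv$3 = 0" "fv \<noteq> 0" "x *\<^sub>R fs + y *\<^sub>R fv = x' *\<^sub>R fs + y' *\<^sub>R fv"
  shows "x = x' \<and> y = y'"
proof -
  have "(x *\<^sub>R fs + y *\<^sub>R fv)$3 = (x' *\<^sub>R fs + y' *\<^sub>R fv)$3" using assms(4) by simp
  then have xx: "x = x'" using assms(1,2) by simp
  then have "y *\<^sub>R fv = y' *\<^sub>R fv" using assms(4) by simp
  then have "y = y'" using assms(3) by simp
  with xx show ?thesis by simp
qed



theorem theorem4p2:
  fixes m :: nat and c2 c3 :: real
  assumes "m \<ge> 2" and "c2 > 0"
  shows "\<exists>d1. d1 > 0 \<and> (J m c2 \<longlongrightarrow> d1) at_top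
    \<and> (\<forall>\<alpha>\<ge>c2. J_integrand m c2 integrable_on {c2..\<alpha>})
    \<and> strict_mono_on {c2..} (J m c2) \<and> bij_betw (J m c2) {c2..} {0..<d1}
    \<and> (\<forall>ah :: real \<Rightarrow> real.
         (\<forall>u\<in>{c3-d1<..<c3+d1}. ah u \<ge> c2 \<and> J m c2 (ah u) = \<bar>u - c3\<bar>) \<longrightarrow>
         ah c3 = c2
         \<and> (\<exists>a1 a2. (\<forall>u\<in>{c3-d1<..<c3+d1}. (ah has_real_derivative a1 u) (at u)
                                          \<and> (a1 has_real_derivative a2 u) (at u))
                   \<and> continuous_on {c3-d1<..<c3+d1} a2
                   \<and> a1 c3 = 0 \<and> a2 c3 = 0)
         \<and> filterlim ah at_top (at_left (c3 + d1))
         \<and> filterlim ah at_top (at_right (c3 - d1))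
         \<and> (let D = {c3-d1<..<c3+d1} \<times> {0..2*pi}; f = rot_surface ah in
            \<exists>(\<eta> :: real \<times> real \<Rightarrow> real^3) (\<eta>' :: real \<times> real \<Rightarrow> ((real \<times> real) \<Rightarrow>\<^sub>L (real^3))).
              (\<forall>p\<in>D. BG_at m f \<eta> p)
              \<and> (\<forall>p\<in>D. (\<eta> has_derivative blinfun_apply (\<eta>' p)) (at p within D))
              \<and> continuous_on D \<eta>'
              \<and> (\<forall>p\<in>D. dEta_endomorphism (partial_s f p) (partial_v f p) (blinfun_apply (\<eta>' p) (1,0)) (blinfun_apply (\<eta>' p) (0,1))
                       \<and> mink_mean_curv (partial_s f p) (partial_v f p) (blinfun_apply (\<eta>' p) (1,0)) (blinfun_apply (\<eta>' p) (0,1)) = 0)))"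
proof -
  have m2: "2 \<le> m" and c2: "0 < c2" using assms by auto
  define d where "d = d1 m c2"
  have dpos: "0 < d" using d1_pos[OF m2 c2] d_def by simp
  have lim: "(J m c2 \<longlongrightarrow> d) at_top" using J_lim[OF m2 c2] d_def by simp
  have int: "\<forall>\<alpha>\<ge>c2. J_integrand m c2 integrable_on {c2..\<alpha>}" using J_has_integral[OF m2 c2] by blast
  have Jinj: "x = y" if "c2 \<le> x" "c2 \<le> y" "J m c2 x = J m c2 y" for x y
    using J_strict[OF m2 c2, of x y] J_strict[OF m2 c2, of y x] that by (cases x y rule: linorder_cases) auto
  have sm: "strict_mono_on {c2..} (J m c2)" by (rule strict_mono_onI) (use J_strict[OF m2 c2] in auto)
  have bij: "bij_betw (J m c2) {c2..} {0..<d}"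
    unfolding bij_betw_def
  proof
    show "inj_on (J m c2) {c2..}" using Jinj by (auto simp: inj_on_def)
    show "J m c2 ` {c2..} = {0..<d}"
    proof
      show "J m c2 ` {c2..} \<subseteq> {0..<d}" using J_range[OF m2 c2] d_def by auto
      show "{0..<d} \<subseteq> J m c2 ` {c2..}"
      proof
        fix y assume "y \<in> {0..<d}"
        then obtain a where "c2 \<le> a" "J m c2 a = y" using J_surj[OF m2 c2, of y] d_def by auto
        then show "y \<in> J m c2 ` {c2..}" by auto
      qed
    qed
  qed
  have J_c2: "J m c2 c2 = 0" using J_eq[OF m2 c2 order_refl] zz_c2[OF m2 c2] GG0[OF m2 c2] by simp
  have main: "\<forall>ah :: real \<Rightarrow> real.
         (\<forall>u\<in>{c3-d<..<c3+d}. ah u \<ge> c2 \<and> J m c2 (ah u) = \<bar>u - c3\<bar>) \<longrightarrow>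
         ah c3 = c2
         \<and> (\<exists>a1 a2. (\<forall>u\<in>{c3-d<..<c3+d}. (ah has_real_derivative a1 u) (at u)
                                          \<and> (a1 has_real_derivative a2 u) (at u))
                   \<and> continuous_on {c3-d<..<c3+d} a2
                   \<and> a1 c3 = 0 \<and> a2 c3 = 0)
         \<and> filterlim ah at_top (at_left (c3 + d))
         \<and> filterlim ah at_top (at_right (c3 - d))
         \<and> (let D = {c3-d<..<c3+d} \<times> {0..2*pi}; f = rot_surface ah in
            \<exists>(\<eta> :: real \<times> real \<Rightarrow> real^3) (\<eta>' :: real \<times> real \<Rightarrow> ((real \<times> real) \<Rightarrow>\<^sub>L (real^3))).
              (\<forall>p\<in>D. BG_at m f \<eta> p)
              \<and> (\<forall>p\<in>D. (\<eta> has_derivative blinfun_apply (\<eta>' p)) (at p within D))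
              \<and> continuous_on D \<eta>'
              \<and> (\<forall>p\<in>D. dEta_endomorphism (partial_s f p) (partial_v f p) (blinfun_apply (\<eta>' p) (1,0)) (blinfun_apply (\<eta>' p) (0,1))
                       \<and> mink_mean_curv (partial_s f p) (partial_v f p) (blinfun_apply (\<eta>' p) (1,0)) (blinfun_apply (\<eta>' p) (0,1)) = 0))"
  proof (intro allI impI)
    fix ah :: "real \<Rightarrow> real"
    assume H: "\<forall>u\<in>{c3-d<..<c3+d}. ah u \<ge> c2 \<and> J m c2 (ah u) = \<bar>u - c3\<bar>"
    define I where "I = {c3-d<..<c3+d}"
    have oI: "open I" by (simp add: I_def)
    have c3I: "c3 \<in> I" using dpos by (simp add: I_def)
    have HI: "c2 \<le> ah u" "J m c2 (ah u) = \<bar>u - c3\<bar>" if "u \<in> I" for u using H that by (auto simp: I_def)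
    have absI: "\<bar>u - c3\<bar> < d1 m c2" if "u \<in> I" for u using that by (auto simp: I_def d_def abs_less_iff)
    define Z where "Z u = Zc m c2 (u - c3)" for u
    define T where "T u = TT m (Z u)" for u
    define k where "k u = (T u)^2 / c2" for u
    define A where "A u = AA m c2 (Z u)" for u
    define a1 where "a1 u = (Z u)^(2*m-1) / (T u)^(2*m-1)" for u
    define a2 where "a2 u = Qd m (Z u) * k u" for u
    have Zp: "\<bar>Z u\<bar> < 1" "GG m c2 (Z u) = u - c3" if "u \<in> I" for u
      using Zc_props[OF m2 c2 absI[OF that]] by (auto simp: Z_def)
    have Tpos: "0 < T u" if "u \<in> I" for u using TT_pos[OF m2 c2 Zp(1)[OF that]] by (simp add: T_def)
    have Zd: "(Z has_real_derivative k u) (at u)" if u: "u \<in> I" for u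
    proof -
      have d0: "((\<lambda>u. u - c3) has_real_derivative 1) (at u)" by (auto intro!: derivative_eq_intros)
      have "((\<lambda>u. Zc m c2 (u - c3)) has_real_derivative TT m (Zc m c2 (u - c3))^2 / c2 * 1) (at u)"
        by (rule DERIV_chain'[OF d0 Zc_deriv[OF m2 c2 absI[OF u]]])
      then show ?thesis by (simp add: Z_def[abs_def] k_def T_def)
    qed
    have Zcont: "isCont Z u" if "u \<in> I" for u using Zd[OF that] DERIV_isCont by blast
    have Zc3: "Z c3 = 0" using Zc_GG[OF m2 c2, of 0] GG0[OF m2 c2] by (simp add: Z_def)
    have ahZ: "ah u = A u" if u: "u \<in> I" for u
    proof (rule Jinj)
      show "c2 \<le> ah u" using HI[OF u] by simp
      show "c2 \<le> A u" unfolding A_def by (rule AA_ge[OF m2 c2 Zp(1)[OF u]])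
      show "J m c2 (ah u) = J m c2 (A u)" unfolding A_def J_AA[OF m2 c2 Zp(1)[OF u]] Zp(2)[OF u] HI[OF u] ..
    qed
    have ah_c3: "ah c3 = c2"
      by (rule Jinj) (use HI[OF c3I] J_c2 in auto)
    have kA: "k u * A u = T u" if "u \<in> I" for u
      using Tpos[OF that] c2 by (simp add: k_def A_def AA_def T_def[symmetric] power2_eq_square)
    have ahd: "(ah has_real_derivative a1 u) (at u)" if u: "u \<in> I" for u
    proof -
      have "((\<lambda>u. AA m c2 (Z u)) has_real_derivative
          (0 * TT m (Z u) - c2 * (- (Z u^(2*m-1)) / (TT m (Z u))^(2*m-1))) / (TT m (Z u) * TT m (Z u)) * k u) (at u)"
        by (rule DERIV_chain'[OF Zd[OF u] AA_deriv[OF m2 c2 Zp(1)[OF u]]])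
      moreover have "(0 * TT m (Z u) - c2 * (- (Z u^(2*m-1)) / (TT m (Z u))^(2*m-1))) / (TT m (Z u) * TT m (Z u)) * k u = a1 u"
        using Tpos[OF u] c2 unfolding T_def a1_def k_def by (simp add: field_simps power2_eq_square)
      ultimately have "((\<lambda>u. AA m c2 (Z u)) has_real_derivative a1 u) (at u)" by simp
      then show ?thesis
        by (rule has_field_derivative_transform_within_open[OF _ oI u]) (simp add: ahZ A_def)
    qed
    have a1_eq: "a1 = (\<lambda>u. Z u ^ (2*m-1) / TT m (Z u) ^ (2*m-1))" by (simp add: fun_eq_iff a1_def T_def)
    have a1d: "(a1 has_real_derivative a2 u) (at u)" if u: "u \<in> I" for u
      unfolding a1_eq a2_def by (rule DERIV_chain'[OF Zd[OF u] Q_deriv[OF m2 c2 Zp(1)[OF u]]])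
    have a2cont: "continuous_on I a2"
    proof (rule continuous_at_imp_continuous_on, intro ballI)
      fix u assume u: "u \<in> I"
      have c1: "isCont (\<lambda>u. Qd m (Z u)) u" by (rule isCont_o2[OF Zcont[OF u] Qd_cont[OF m2 c2 Zp(1)[OF u]]])
      have c2': "isCont (\<lambda>u. TT m (Z u)) u" by (rule isCont_o2[OF Zcont[OF u] TT_cont[OF m2 c2 Zp(1)[OF u]]])
      show "isCont a2 u" unfolding a2_def[abs_def] k_def T_def using c2 by (intro continuous_intros c1 c2') auto
    qed
    have a1c3: "a1 c3 = 0" using m2 by (simp add: a1_def Zc3 power_0_left)
    have a2c3: "a2 c3 = 0" using Qd0[OF m2 c2] by (simp add: a2_def Zc3)
    have lim1: "filterlim ah at_top (at_left (c3 + d))"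
      unfolding filterlim_at_top
    proof
      fix B :: real
      define b where "b = max B c2"
      have Jb: "0 \<le> J m c2 b" "J m c2 b < d" using J_range[OF m2 c2, of b] by (auto simp: b_def d_def)
      have "eventually (\<lambda>u. u \<in> {c3 + J m c2 b<..<c3+d}) (at_left (c3+d))"
        by (rule eventually_at_left_real) (use Jb in simp)
      then show "eventually (\<lambda>u. B \<le> ah u) (at_left (c3+d))"
      proof (rule eventually_mono)
        fix u assume u: "u \<in> {c3 + J m c2 b<..<c3+d}"
        then have uI: "u \<in> I" using Jb by (auto simp: I_def)
        have "J m c2 b < J m c2 (ah u)" using HI[OF uI] u by auto
        have "\<not> ah u \<le> b"
        proof
          assume le: "ah u \<le> b"
          have "J m c2 (ah u) \<le> J m c2 b"
          proof (cases "ah u = b")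
            case True then show ?thesis by simp
          next
            case False with le have "ah u < b" by simp
            then show ?thesis using J_strict[OF m2 c2 HI(1)[OF uI]] by (simp add: less_imp_le)
          qed
          then show False using \<open>J m c2 b < J m c2 (ah u)\<close> by simp
        qed
        then have "b < ah u" by simp
        then show "B \<le> ah u" by (simp add: b_def)
      qed
    qed
    have lim2: "filterlim ah at_top (at_right (c3 - d))"
      unfolding filterlim_at_top
    proof
      fix B :: real
      define b where "b = max B c2"
      have Jb: "0 \<le> J m c2 b" "J m c2 b < d" using J_range[OF m2 c2, of b] by (auto simp: b_def d_def)
      have "eventually (\<lambda>u. u \<in> {c3 - d<..<c3 - J m c2 b}) (at_right (c3-d))"
        by (rule eventually_at_right_real) (use Jb in simp)
      then show "eventually (\<lambda>u. B \<le> ah u) (at_right (c3-d))"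
      proof (rule eventually_mono)
        fix u assume u: "u \<in> {c3 - d<..<c3 - J m c2 b}"
        then have uI: "u \<in> I" using Jb by (auto simp: I_def)
        have "J m c2 b < J m c2 (ah u)" using HI[OF uI] u by auto
        have "\<not> ah u \<le> b"
        proof
          assume le: "ah u \<le> b"
          have "J m c2 (ah u) \<le> J m c2 b"
          proof (cases "ah u = b")
            case True then show ?thesis by simp
          next
            case False with le have "ah u < b" by simp
            then show ?thesis using J_strict[OF m2 c2 HI(1)[OF uI]] by (simp add: less_imp_le)
          qed
          then show False using \<open>J m c2 b < J m c2 (ah u)\<close> by simp
        qed
        then have "b < ah u" by simp
        then show "B \<le> ah u" by (simp add: b_def)
      qed
    qed
    have surf: "\<exists>(\<eta> :: real \<times> real \<Rightarrow> real^3) (\<eta>' :: real \<times> real \<Rightarrow> ((real \<times> real) \<Rightarrow>\<^sub>L (real^3))).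
              (\<forall>p\<in>I \<times> {0..2*pi}. BG_at m (rot_surface ah) \<eta> p)
              \<and> (\<forall>p\<in>I \<times> {0..2*pi}. (\<eta> has_derivative blinfun_apply (\<eta>' p)) (at p within I \<times> {0..2*pi}))
              \<and> continuous_on (I \<times> {0..2*pi}) \<eta>'
              \<and> (\<forall>p\<in>I \<times> {0..2*pi}. dEta_endomorphism (partial_s (rot_surface ah) p) (partial_v (rot_surface ah) p) (blinfun_apply (\<eta>' p) (1,0)) (blinfun_apply (\<eta>' p) (0,1))
                       \<and> mink_mean_curv (partial_s (rot_surface ah) p) (partial_v (rot_surface ah) p) (blinfun_apply (\<eta>' p) (1,0)) (blinfun_apply (\<eta>' p) (0,1)) = 0)"
    proof -
      define D where "D = I \<times> {0..2*pi}"
      have DI: "fst p \<in> I" if "p \<in> D" for p using that by (auto simp: D_def)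
      define fs where "fs p = (vector [a1 (fst p) * cos (snd p), a1 (fst p) * sin (snd p), 1] :: real^3)" for p
      define fv where "fv p = (vector [-(A (fst p) * sin (snd p)), A (fst p) * cos (snd p), 0] :: real^3)" for p
      define \<eta> where "\<eta> p = (vector [-(T (fst p) * cos (snd p)), -(T (fst p) * sin (snd p)), Z (fst p)] :: real^3)" for p
      define L where "L p h = k (fst p) *\<^sub>R (fst h *\<^sub>R fs p - snd h *\<^sub>R fv p)" for p and h :: "real \<times> real"
      define \<eta>' where "\<eta>' p = Blinfun (L p)" for p
      have fst_d: "(fst has_derivative fst) (at p)" for p :: "real \<times> real"
        by (rule bounded_linear_imp_has_derivative[OF bounded_linear_fst])
      have fderiv: "(rot_surface ah has_derivative (\<lambda>h. fst h *\<^sub>R fs p + snd h *\<^sub>R fv p)) (at p)" if p: "p \<in> D" for p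
      proof -
        have u: "fst p \<in> I" using DI[OF p] .
        have "((\<lambda>x. vector [ah (fst x) * cos (snd x), ah (fst x) * sin (snd x), fst x] :: real^3) has_derivative
           (\<lambda>h. vector [a1 (fst p) * fst h * cos (snd p) + ah (fst p) * (- sin (snd p) * snd h),
                         a1 (fst p) * fst h * sin (snd p) + ah (fst p) * (cos (snd p) * snd h), fst h])) (at p)"
          by (rule has_derivative_vec3[OF prod_deriv[OF ahd[OF u] DERIV_cos] prod_deriv[OF ahd[OF u] DERIV_sin] fst_d])
        then have "((\<lambda>x. vector [ah (fst x) * cos (snd x), ah (fst x) * sin (snd x), fst x] :: real^3) has_derivative
           (\<lambda>h. fst h *\<^sub>R fs p + snd h *\<^sub>R fv p)) (at p)"
          by (rule has_derivative_eq_rhs) (auto simp: fun_eq_iff vec_eq_iff forall_3 fs_def fv_def ahZ[OF u] algebra_simps)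
        moreover have "rot_surface ah = (\<lambda>x. vector [ah (fst x) * cos (snd x), ah (fst x) * sin (snd x), fst x])"
          by (simp add: fun_eq_iff rot_surface_def)
        ultimately show ?thesis by simp
      qed
      have ps: "partial_s (rot_surface ah) p = fs p" and pv: "partial_v (rot_surface ah) p = fv p" if p: "p \<in> D" for p
        using frechet_derivative_at[OF fderiv[OF p], symmetric] by (auto simp: partial_s_def partial_v_def)
      have Llin: "bounded_linear (L p)" for p
        unfolding linear_conv_bounded_linear[symmetric] L_def
        by (rule linearI) (auto simp: algebra_simps)
      have \<eta>'_apply: "blinfun_apply (\<eta>' p) = L p" for p
        unfolding \<eta>'_def by (rule bounded_linear_Blinfun_apply[OF Llin])
      have \<eta>d: "(\<eta> has_derivative L p) (at p)" if p: "p \<in> D" for p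
      proof -
        have u: "fst p \<in> I" using DI[OF p] .
        have Td: "(T has_real_derivative (- (Z (fst p) ^ (2*m-1)) / (TT m (Z (fst p)))^(2*m-1)) * k (fst p)) (at (fst p))"
          unfolding T_def[abs_def] by (rule DERIV_chain'[OF Zd[OF u] TT_deriv[OF m2 c2 Zp(1)[OF u]]])
        have "(\<eta> has_derivative
           (\<lambda>h. vector [- ((- (Z (fst p) ^ (2*m-1)) / (TT m (Z (fst p)))^(2*m-1)) * k (fst p) * fst h * cos (snd p) + T (fst p) * (- sin (snd p) * snd h)),
                         - ((- (Z (fst p) ^ (2*m-1)) / (TT m (Z (fst p)))^(2*m-1)) * k (fst p) * fst h * sin (snd p) + T (fst p) * (cos (snd p) * snd h)),
                         k (fst p) * fst h])) (at p)"
          unfolding \<eta>_def[abs_def]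
          by (rule has_derivative_vec3[OF has_derivative_minus[OF prod_deriv[OF Td DERIV_cos]] has_derivative_minus[OF prod_deriv[OF Td DERIV_sin]] comp_fst[OF Zd[OF u]]])
        then show ?thesis
          by (rule has_derivative_eq_rhs)
             (auto simp: fun_eq_iff vec_eq_iff forall_3 L_def fs_def fv_def a1_def T_def[symmetric] kA[OF u, symmetric] algebra_simps)
      qed
      have Apos: "0 < A u" if "u \<in> I" for u using Tpos[OF that] c2 by (simp add: A_def AA_def T_def[symmetric])
      have BG: "BG_at m (rot_surface ah) \<eta> p" if p: "p \<in> D" for p
      proof -
        define u where "u = fst p"
        define v where "v = snd p"
        define t where "t = T u"
        define z where "z = Z u"
        define P where "P = t^(2*m-1)"
        have u: "u \<in> I" using DI[OF p] by (simp add: u_def)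
        have tpos: "0 < t" using Tpos[OF u] by (simp add: t_def)
        have tz: "t^(2*m) = 1 - z^(2*m)" using TT_pow[OF m2 c2 Zp(1)[OF u]] by (simp add: t_def z_def T_def)
        have e1: "\<eta> p $ 1 = -(t * cos v)" "\<eta> p $ 2 = -(t * sin v)" "\<eta> p $ 3 = z"
          by (simp_all add: \<eta>_def t_def z_def u_def v_def)
        have sq: "(-(t * cos v))^2 + (-(t * sin v))^2 = t^2"
        proof -
          have "(-(t * cos v))^2 + (-(t * sin v))^2 = t^2 * ((cos v)^2 + (sin v)^2)" by (simp only: power_mult_distrib distrib_left power2_minus)
          then show ?thesis by simp
        qed
        have "Phi m (\<eta> p) = (t^2)^m + z^(2*m)" unfolding Phi_def e1 sq by simp
        also have "\<dots> = 1" using tz by (simp add: power_mult[symmetric])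
        finally have sphere: "\<eta> p \<in> unit_sphere m" by (simp add: unit_sphere_def)
        define \<mu> where "\<mu> = real (2*m) * t^(2*m) / c2"
        have mupos: "0 < \<mu>" using tpos c2 m2 by (simp add: \<mu>_def)
        have F1: "(t^2)^(m-1) * t = P"
        proof -
          have "(t^2)^(m-1) * t = t^(2*(m-1)+1)" by (simp add: power_mult power_add)
          also have "2*(m-1)+1 = 2*m-1" using m2 by simp
          finally show ?thesis by (simp add: P_def)
        qed
        have tP: "t^(2*m) = P * t"
        proof -
          have "t^(2*m) = t^(2*m-1+1)" using m2 by simp
          then show ?thesis by (simp add: P_def power_add)
        qed
        have F2: "\<mu> * A u = 2 * real m * P"
          using tpos c2 unfolding \<mu>_def tP by (simp add: A_def AA_def T_def[symmetric] t_def[symmetric] field_simps)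
        have F3: "P * a1 u = z^(2*m-1)"
          using tpos by (simp add: a1_def P_def z_def t_def)
        have grad: "(\<lambda>h. real m * ((\<eta> p $ 1)^2 + (\<eta> p $ 2)^2)^(m-1) * (2*(\<eta> p $ 1)*h$1 + 2*(\<eta> p $ 2)*h$2) + real (2*m) * (\<eta> p $ 3)^(2*m-1) * h$3)
            = (\<lambda>h. inner (\<mu> *\<^sub>R cross3 (partial_s (rot_surface ah) p) (partial_v (rot_surface ah) p)) h)"
        proof
          fix h :: "real^3"
          have "real m * ((\<eta> p $ 1)^2 + (\<eta> p $ 2)^2)^(m-1) * (2*(\<eta> p $ 1)*h$1 + 2*(\<eta> p $ 2)*h$2) + real (2*m) * (\<eta> p $ 3)^(2*m-1) * h$3
              = - (2 * real m * ((t^2)^(m-1) * t)) * (cos v * h$1 + sin v * h$2) + 2 * real m * z^(2*m-1) * h$3"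
            unfolding e1 sq by (simp add: algebra_simps)
          also have "\<dots> = - (2 * real m * P) * (cos v * h$1 + sin v * h$2) + 2 * real m * (P * a1 u) * h$3"
            unfolding F1 F3 ..
          also have "\<dots> = -(\<mu> * A u) * (cos v * h$1 + sin v * h$2) + (\<mu> * A u) * a1 u * h$3"
            unfolding F2 by (simp add: algebra_simps)
          also have "\<dots> = -(\<mu> * A u) * (cos v * h$1 + sin v * h$2) + (\<mu> * A u) * a1 u * h$3 * (cos v * cos v + sin v * sin v)"
            by simp
          also have "\<dots> = inner (\<mu> *\<^sub>R cross3 (fs p) (fv p)) h"
            by (simp add: cross3_def inner_vec_def sum_3 fs_def fv_def u_def v_def algebra_simps del: sin_cos_squared_add3)
          also have "\<dots> = inner (\<mu> *\<^sub>R cross3 (partial_s (rot_surface ah) p) (partial_v (rot_surface ah) p)) h"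
            by (simp add: ps[OF p] pv[OF p])
          finally show "real m * ((\<eta> p $ 1)^2 + (\<eta> p $ 2)^2)^(m-1) * (2*(\<eta> p $ 1)*h$1 + 2*(\<eta> p $ 2)*h$2) + real (2*m) * (\<eta> p $ 3)^(2*m-1) * h$3
            = inner (\<mu> *\<^sub>R cross3 (partial_s (rot_surface ah) p) (partial_v (rot_surface ah) p)) h" .
        qed
        have "(Phi m has_derivative (\<lambda>h. inner (\<mu> *\<^sub>R cross3 (partial_s (rot_surface ah) p) (partial_v (rot_surface ah) p)) h)) (at (\<eta> p))"
          using Phi_deriv[of m "\<eta> p"] unfolding grad .
        then show ?thesis unfolding BG_at_def using sphere mupos by blast
      qed
      have cont: "continuous_on D \<eta>'"
      proof (rule continuous_on_blinfun_componentwise)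
        fix i :: "real \<times> real"
        show "continuous_on D (\<lambda>x. blinfun_apply (\<eta>' x) i)"
        proof (rule continuous_at_imp_continuous_on, intro ballI)
          fix p assume p: "p \<in> D"
          have u: "fst p \<in> I" using DI[OF p] .
          have cZ: "isCont (\<lambda>p. Z (fst p)) p"
            by (rule isCont_o2[OF continuous_fst[OF continuous_ident] Zcont[OF u]])
          have cT: "isCont (\<lambda>p. TT m (Z (fst p))) p"
            by (rule isCont_o2[OF cZ TT_cont[OF m2 c2 Zp(1)[OF u]]])
          have Tn: "TT m (Z (fst p)) \<noteq> 0" using Tpos[OF u] by (simp add: T_def)
          show "isCont (\<lambda>x. blinfun_apply (\<eta>' x) i) p"
            unfolding \<eta>'_apply L_def fs_def fv_def vec3_eq k_def T_def a1_def A_def AA_def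
            using Tn c2 by (intro continuous_intros cZ cT) auto
        qed
      qed
      have endo: "dEta_endomorphism (fs p) (fv p) (L p (1,0)) (L p (0,1))
                  \<and> mink_mean_curv (fs p) (fv p) (L p (1,0)) (L p (0,1)) = 0" if p: "p \<in> D" for p
      proof -
        have u: "fst p \<in> I" using DI[OF p] .
        have L10: "L p (1,0) = k (fst p) *\<^sub>R fs p + 0 *\<^sub>R fv p" by (simp add: L_def)
        have L01: "L p (0,1) = 0 *\<^sub>R fs p + (- k (fst p)) *\<^sub>R fv p" by (simp add: L_def)
        have fs3: "fs p $ 3 = 1" and fv3: "fv p $ 3 = 0" by (simp_all add: fs_def fv_def)
        have fvnz: "fv p \<noteq> 0"
        proof
          assume "fv p = 0"
          then have "(fv p $ 1)^2 + (fv p $ 2)^2 = 0" by simp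
          moreover have "(fv p $ 1)^2 + (fv p $ 2)^2 = (A (fst p))^2 * (sin (snd p) ^ 2 + cos (snd p) ^ 2)"
            by (simp only: fv_def vector_3 power_mult_distrib distrib_left power2_minus)
          ultimately show False using Apos[OF u] by simp
        qed
        have ex: "\<exists>a b c d. L p (1,0) = a *\<^sub>R fs p + b *\<^sub>R fv p \<and> L p (0,1) = c *\<^sub>R fs p + d *\<^sub>R fv p \<and> 0 = (a + d) / 2"
          using L10 L01 by (intro exI[of _ "k (fst p)"] exI[of _ 0] exI[of _ "- k (fst p)"]) simp
        have "mink_mean_curv (fs p) (fv p) (L p (1,0)) (L p (0,1)) = 0"
          unfolding mink_mean_curv_def
        proof (rule the_equality)
          show "\<exists>a b c d. L p (1,0) = a *\<^sub>R fs p + b *\<^sub>R fv p \<and> L p (0,1) = c *\<^sub>R fs p + d *\<^sub>R fv p \<and> 0 = (a + d) / 2"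
            by (rule ex)
          fix H assume "\<exists>a b c d. L p (1,0) = a *\<^sub>R fs p + b *\<^sub>R fv p \<and> L p (0,1) = c *\<^sub>R fs p + d *\<^sub>R fv p \<and> H = (a + d) / 2"
          then obtain a b c d where abcd: "L p (1,0) = a *\<^sub>R fs p + b *\<^sub>R fv p" "L p (0,1) = c *\<^sub>R fs p + d *\<^sub>R fv p" "H = (a + d) / 2"
            by blast
          have "k (fst p) = a \<and> 0 = b" by (rule indep3[OF fs3 fv3 fvnz]) (use L10 abcd in simp)
          moreover have "0 = c \<and> - k (fst p) = d" by (rule indep3[OF fs3 fv3 fvnz]) (use L01 abcd in simp)
          ultimately show "H = 0" using abcd by simp
        qed
        moreover have "dEta_endomorphism (fs p) (fv p) (L p (1,0)) (L p (0,1))"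
          unfolding dEta_endomorphism_def using ex by blast
        ultimately show ?thesis by simp
      qed
      show ?thesis
        unfolding D_def[symmetric]
      proof (intro exI[of _ \<eta>] exI[of _ \<eta>'] conjI ballI)
        fix p assume p: "p \<in> D"
        show "BG_at m (rot_surface ah) \<eta> p" by (rule BG[OF p])
        show "(\<eta> has_derivative blinfun_apply (\<eta>' p)) (at p within D)"
          unfolding \<eta>'_apply by (rule has_derivative_at_withinI[OF \<eta>d[OF p]])
        show "dEta_endomorphism (partial_s (rot_surface ah) p) (partial_v (rot_surface ah) p) (blinfun_apply (\<eta>' p) (1, 0)) (blinfun_apply (\<eta>' p) (0, 1))"
          using endo[OF p] by (simp add: ps[OF p] pv[OF p] \<eta>'_apply)
        show "mink_mean_curv (partial_s (rot_surface ah) p) (partial_v (rot_surface ah) p) (blinfun_apply (\<eta>' p) (1, 0)) (blinfun_apply (\<eta>' p) (0, 1)) = 0"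
          using endo[OF p] by (simp add: ps[OF p] pv[OF p] \<eta>'_apply)
      next
        show "continuous_on D \<eta>'" by (rule cont)
      qed
    qed
    show "ah c3 = c2
         \<and> (\<exists>a1 a2. (\<forall>u\<in>{c3-d<..<c3+d}. (ah has_real_derivative a1 u) (at u)
                                          \<and> (a1 has_real_derivative a2 u) (at u))
                   \<and> continuous_on {c3-d<..<c3+d} a2
                   \<and> a1 c3 = 0 \<and> a2 c3 = 0)
         \<and> filterlim ah at_top (at_left (c3 + d))
         \<and> filterlim ah at_top (at_right (c3 - d))
         \<and> (let D = {c3-d<..<c3+d} \<times> {0..2*pi}; f = rot_surface ah in
            \<exists>(\<eta> :: real \<times> real \<Rightarrow> real^3) (\<eta>' :: real \<times> real \<Rightarrow> ((real \<times> real) \<Rightarrow>\<^sub>L (real^3))).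
              (\<forall>p\<in>D. BG_at m f \<eta> p)
              \<and> (\<forall>p\<in>D. (\<eta> has_derivative blinfun_apply (\<eta>' p)) (at p within D))
              \<and> continuous_on D \<eta>'
              \<and> (\<forall>p\<in>D. dEta_endomorphism (partial_s f p) (partial_v f p) (blinfun_apply (\<eta>' p) (1,0)) (blinfun_apply (\<eta>' p) (0,1))
                       \<and> mink_mean_curv (partial_s f p) (partial_v f p) (blinfun_apply (\<eta>' p) (1,0)) (blinfun_apply (\<eta>' p) (0,1)) = 0))"
      unfolding Let_def I_def[symmetric]
      using ah_c3 ahd a1d a2cont a1c3 a2c3 lim1 lim2 surf by blast
  qed
  show ?thesis
    by (rule exI[of _ d]) (use dpos lim int sm bij main in auto)
qed


end
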